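(* The dimension of any compact $\Phi$-SSU Riemannian manifold is greater than $4$.
   Context: A Riemannian $n$-manifold $N$ is $\Phi$-SSU if there is an isometric immersion $N\to\mathbb R^q$ with second fundamental form $\mathsf B$ such that for every $y\in N$ and every unit $\mathsf x\in T_yN$, $\sum_{\beta=1}^n\big(4|\mathsf B(\mathsf x,\mathsf e_\beta)|^2-\langle \mathsf B(\mathsf x,\mathsf x),\mathsf B(\mathsf e_\beta,\mathsf e_\beta)\rangle\big)<0$, where $\{\mathsf e_\beta\}$ is an orthonormal basis of $T_yN$. *)

theory Defs
  imports "HOL-Analysis.Analysis"
begin

fun Ck_on :: "nat \<Rightarrow> 'a::euclidean_space set \<Rightarrow> ('a \<Rightarrow> 'b::real_normed_vector) \<Rightarrow> bool" where
  "Ck_on 0 S f = continuous_on S f"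
| "Ck_on (Suc k) S f =
     ((\<forall>x\<in>S. f differentiable (at x)) \<and>
      (\<forall>v. Ck_on k S (\<lambda>x. frechet_derivative f (at x) v)))"

definition smooth_on :: "'a::euclidean_space set \<Rightarrow> ('a \<Rightarrow> 'b::real_normed_vector) \<Rightarrow> bool" where
  "smooth_on S f \<longleftrightarrow> (\<forall>k. Ck_on k S f)"

definition is_chart :: "'a topology \<Rightarrow> ('a \<Rightarrow> real^'n) \<Rightarrow> 'a set \<Rightarrow> bool" where
  "is_chart X \<phi> U \<longleftrightarrow> openin X U \<and> open (\<phi> ` U) \<and>
     homeomorphic_map (subtopology X U) (top_of_set (\<phi> ` U)) \<phi>"

definition smooth_atlas :: "'a topology \<Rightarrow> (('a \<Rightarrow> real^'n) \<times> 'a set) set \<Rightarrow> bool" where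
  "smooth_atlas X A \<longleftrightarrow>
     (\<forall>(\<phi>, U)\<in>A. is_chart X \<phi> U) \<and>
     \<Union> (snd ` A) = topspace X \<and>
     (\<forall>(\<phi>, U)\<in>A. \<forall>(\<psi>, V)\<in>A. smooth_on (\<phi> ` (U \<inter> V)) (\<psi> \<circ> inv_into U \<phi>))"

definition compact_smooth_manifold :: "'a topology \<Rightarrow> (('a \<Rightarrow> real^'n) \<times> 'a set) set \<Rightarrow> bool" where
  "compact_smooth_manifold X A \<longleftrightarrow>
     topspace X \<noteq> {} \<and> Hausdorff_space X \<and> compact_space X \<and> smooth_atlas X A"

definition local_rep :: "('a \<Rightarrow> real^'q) \<Rightarrow> ('a \<Rightarrow> real^'n) \<Rightarrow> 'a set \<Rightarrow> real^'n \<Rightarrow> real^'q" where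
  "local_rep F \<phi> U = F \<circ> inv_into U \<phi>"

definition smooth_immersion ::
  "'a topology \<Rightarrow> (('a \<Rightarrow> real^'n) \<times> 'a set) set \<Rightarrow> ('a \<Rightarrow> real^'q) \<Rightarrow> bool" where
  "smooth_immersion X A F \<longleftrightarrow>
     (\<forall>(\<phi>, U)\<in>A. smooth_on (\<phi> ` U) (local_rep F \<phi> U) \<and>
        (\<forall>u\<in>\<phi> ` U. inj (frechet_derivative (local_rep F \<phi> U) (at u))))"

definition ind_metric :: "(real^'n \<Rightarrow> real^'q) \<Rightarrow> real^'n \<Rightarrow> real^'n \<Rightarrow> real^'n \<Rightarrow> real" where
  "ind_metric f u v w = frechet_derivative f (at u) v \<bullet> frechet_derivative f (at u) w"

definition normal_part :: "'b::euclidean_space set \<Rightarrow> 'b \<Rightarrow> 'b" where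
  "normal_part T z = z - (THE p. p \<in> T \<and> (\<forall>t\<in>T. (z - p) \<bullet> t = 0))"

definition sff :: "(real^'n \<Rightarrow> real^'q) \<Rightarrow> real^'n \<Rightarrow> real^'n \<Rightarrow> real^'n \<Rightarrow> real^'q" where
  "sff f u v w =
     normal_part (range (frechet_derivative f (at u)))
       (frechet_derivative (\<lambda>y. frechet_derivative f (at y) w) (at u) v)"

definition g_orthonormal_basis :: "(real^'n \<Rightarrow> real^'n \<Rightarrow> real) \<Rightarrow> ('n \<Rightarrow> real^'n) \<Rightarrow> bool" where
  "g_orthonormal_basis g e \<longleftrightarrow> (\<forall>i j. g (e i) (e j) = (if i = j then 1 else 0))"

definition Phi_SSU_immersion ::
  "'a topology \<Rightarrow> (('a \<Rightarrow> real^'n) \<times> 'a set) set \<Rightarrow> ('a \<Rightarrow> real^'q) \<Rightarrow> bool" where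
  "Phi_SSU_immersion X A F \<longleftrightarrow>
     (\<forall>(\<phi>, U)\<in>A. \<forall>u\<in>\<phi> ` U.
        let f = local_rep F \<phi> U; g = ind_metric f u; B = sff f u in
        \<forall>x e. g x x = 1 \<longrightarrow> g_orthonormal_basis g e \<longrightarrow>
          (\<Sum>\<beta>\<in>UNIV. 4 * (norm (B x (e \<beta>)))\<^sup>2 - B x x \<bullet> B (e \<beta>) (e \<beta>)) < 0)"

text \<open>A compact Riemannian n-manifold is Phi-SSU iff it is (up to isometry) a compact
smooth manifold with the metric induced by a smooth immersion F into some R^q
satisfying the condition above.\<close>
definition compact_Phi_SSU ::
  "'a topology \<Rightarrow> (('a \<Rightarrow> real^'n) \<times> 'a set) set \<Rightarrow> ('a \<Rightarrow> real^'q) \<Rightarrow> bool" where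
  "compact_Phi_SSU X A F \<longleftrightarrow>
     compact_smooth_manifold X A \<and> smooth_immersion X A F \<and> Phi_SSU_immersion X A F"

end

theory Submission
  imports Defs
begin

lemma alg_part:
  fixes B :: "'n::finite \<Rightarrow> 'n \<Rightarrow> 'b::real_inner"
  assumes h: "\<And>\<alpha>. (\<Sum>\<beta>\<in>UNIV. 4 * (norm (B \<alpha> \<beta>))\<^sup>2 - B \<alpha> \<alpha> \<bullet> B \<beta> \<beta>) < 0"
  shows "CARD('n) > 4"
proof -
  define H where "H = (\<Sum>\<beta>\<in>UNIV. B \<beta> \<beta>)"
  define D where "D = (\<Sum>\<alpha>\<in>UNIV. (norm (B \<alpha> \<alpha>))\<^sup>2)"
  define T where "T = (\<Sum>\<alpha>\<in>UNIV. \<Sum>\<beta>\<in>UNIV. (norm (B \<alpha> \<beta>))\<^sup>2)"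
  have eq: "\<And>\<alpha>. (\<Sum>\<beta>\<in>UNIV. 4 * (norm (B \<alpha> \<beta>))\<^sup>2 - B \<alpha> \<alpha> \<bullet> B \<beta> \<beta>)
     = 4 * (\<Sum>\<beta>\<in>UNIV. (norm (B \<alpha> \<beta>))\<^sup>2) - B \<alpha> \<alpha> \<bullet> H"
    by (simp add: H_def sum_subtractf sum_distrib_left inner_sum_right)
  have "(\<Sum>\<alpha>\<in>UNIV. (\<Sum>\<beta>\<in>UNIV. 4 * (norm (B \<alpha> \<beta>))\<^sup>2 - B \<alpha> \<alpha> \<bullet> B \<beta> \<beta>)) < 0"
    using sum_strict_mono[of "UNIV::'n set" _ "\<lambda>_. 0::real"] h by simp
  moreover have HH: "H \<bullet> H = (\<Sum>\<alpha>\<in>UNIV. \<Sum>\<beta>\<in>UNIV. B \<alpha> \<alpha> \<bullet> B \<beta> \<beta>)"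
  proof -
    have "H \<bullet> H = (\<Sum>\<beta>\<in>UNIV. \<Sum>\<alpha>\<in>UNIV. B \<alpha> \<alpha> \<bullet> B \<beta> \<beta>)"
      by (simp add: H_def inner_sum_left inner_sum_right)
    also have "\<dots> = (\<Sum>\<alpha>\<in>UNIV. \<Sum>\<beta>\<in>UNIV. B \<alpha> \<alpha> \<bullet> B \<beta> \<beta>)"
      by (rule sum.swap)
    finally show ?thesis .
  qed
  moreover have "(\<Sum>\<alpha>\<in>UNIV. (\<Sum>\<beta>\<in>UNIV. 4 * (norm (B \<alpha> \<beta>))\<^sup>2 - B \<alpha> \<alpha> \<bullet> B \<beta> \<beta>)) = 4 * T - H \<bullet> H"
    unfolding HH T_def by (simp add: sum_subtractf sum_distrib_left)
  ultimately have "4 * T - H \<bullet> H < 0" by simp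
  moreover have "D \<le> T"
    unfolding D_def T_def
    by (rule sum_mono) (rule member_le_sum, auto)
  moreover have "H \<bullet> H \<le> real CARD('n) * D"
  proof -
    have "H \<bullet> H = (norm H)\<^sup>2" by (simp add: power2_norm_eq_inner)
    also have "\<dots> \<le> (\<Sum>\<beta>\<in>UNIV. norm (B \<beta> \<beta>))\<^sup>2"
      unfolding H_def by (rule power_mono[OF norm_sum]) simp
    also have "\<dots> = (\<Sum>\<beta>\<in>UNIV. 1 * norm (B \<beta> \<beta>))\<^sup>2" by simp
    also have "\<dots> \<le> (\<Sum>\<beta>\<in>(UNIV::'n set). 1\<^sup>2) * (\<Sum>\<beta>\<in>UNIV. (norm (B \<beta> \<beta>))\<^sup>2)"
      by (rule Cauchy_Schwarz_ineq_sum)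
    also have "\<dots> = real CARD('n) * D" by (simp add: D_def)
    finally show ?thesis .
  qed
  moreover have "D \<ge> 0" unfolding D_def by (simp add: sum_nonneg)
  ultimately have "4 * D < real CARD('n) * D" by linarith
  hence "4 < real CARD('n)" using \<open>D \<ge> 0\<close>
    by (metis mult_right_less_imp_less)
  thus ?thesis by simp
qed

lemma ex_onb:
  fixes L :: "real^'n::finite \<Rightarrow> real^'q::finite"
  assumes "linear L" "inj L"
  shows "\<exists>e::'n \<Rightarrow> real^'n. \<forall>i j. L (e i) \<bullet> L (e j) = (if i = j then 1 else 0)"
proof -
  have sub: "subspace (range L)" using assms(1) by (simp add: linear_subspace_image)
  obtain Bs where Bs: "Bs \<subseteq> range L" "pairwise orthogonal Bs" "\<And>x. x \<in> Bs \<Longrightarrow> norm x = 1"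
     "independent Bs" "card Bs = dim (range L)"
    using orthonormal_basis_subspace[OF sub] by metis
  have "dim (range L) = dim (UNIV :: (real^'n) set)"
    using dim_image_eq[OF assms(1)] assms(2) by (metis inj_on_subset subset_UNIV)
  hence cB: "card Bs = CARD('n)" using Bs(5) by simp
  have fB: "finite Bs" using Bs(4) finiteI_independent by blast
  obtain h where h: "bij_betw h (UNIV::'n set) Bs"
    using finite_same_card_bij[OF _ fB] cB by (metis finite_class.finite_UNIV)
  define e where "e i = inv L (h i)" for i
  have Le: "L (e i) = h i" for i
    unfolding e_def using h Bs(1) by (metis bij_betwE f_inv_into_f subsetD UNIV_I)
  show ?thesis
  proof (intro exI allI)
    fix i j
    show "L (e i) \<bullet> L (e j) = (if i = j then 1 else 0)"
    proof (cases "i = j")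
      case True
      have "norm (h i) = 1" using Bs(3) h by (meson bij_betwE UNIV_I)
      then show ?thesis using True Le by (simp add: dot_square_norm)
    next
      case False
      have "h i \<noteq> h j" using False h by (metis bij_betw_imp_inj_on injD)
      moreover have "h i \<in> Bs" "h j \<in> Bs" using h by (auto dest: bij_betwE)
      ultimately have "orthogonal (h i) (h j)" using Bs(2) by (simp add: pairwise_def)
      then show ?thesis using False Le by (simp add: orthogonal_def)
    qed
  qed
qed

theorem theorem7p1:
  fixes X :: "'a topology"
    and A :: "(('a \<Rightarrow> real^'n::finite) \<times> 'a set) set"
    and F :: "'a \<Rightarrow> real^'q::finite"
  assumes "compact_Phi_SSU X A F"
  shows "CARD('n) > 4"
proof -
  have M: "compact_smooth_manifold X A" and I: "smooth_immersion X A F"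
    and P: "Phi_SSU_immersion X A F" using assms by (auto simp: compact_Phi_SSU_def)
  have "topspace X \<noteq> {}" "\<Union> (snd ` A) = topspace X"
    using M by (auto simp: compact_smooth_manifold_def smooth_atlas_def)
  then obtain \<phi> U y where pU: "(\<phi>, U) \<in> A" "y \<in> U" by fastforce
  define u where "u = \<phi> y"
  have u: "u \<in> \<phi> ` U" using pU by (simp add: u_def)
  define f where "f = local_rep F \<phi> U"
  have sm: "smooth_on (\<phi> ` U) f" and inj: "inj (frechet_derivative f (at u))"
    using I pU u by (auto simp: smooth_immersion_def f_def)
  have "Ck_on 1 (\<phi> ` U) f" using sm by (simp add: smooth_on_def)
  hence "f differentiable (at u)" using u by auto
  hence lin: "linear (frechet_derivative f (at u))"
    using frechet_derivative_works has_derivative_linear by blast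
  obtain e :: "'n \<Rightarrow> real^'n" where e: "\<forall>i j. frechet_derivative f (at u) (e i) \<bullet> frechet_derivative f (at u) (e j)
      = (if i = j then 1 else 0)"
    using ex_onb[OF lin inj] by blast
  have go: "g_orthonormal_basis (ind_metric f u) e"
    using e by (simp add: g_orthonormal_basis_def ind_metric_def)
  have PP: "\<forall>x e. ind_metric f u x x = 1 \<longrightarrow> g_orthonormal_basis (ind_metric f u) e \<longrightarrow>
          (\<Sum>\<beta>\<in>UNIV. 4 * (norm (sff f u x (e \<beta>)))\<^sup>2 - sff f u x x \<bullet> sff f u (e \<beta>) (e \<beta>)) < 0"
    using P pU u unfolding Phi_SSU_immersion_def f_def Let_def by fastforce
  show ?thesis
  proof (rule alg_part[of "\<lambda>\<alpha> \<beta>. sff f u (e \<alpha>) (e \<beta>)"])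
    fix \<alpha>
    have "ind_metric f u (e \<alpha>) (e \<alpha>) = 1" using go by (simp add: g_orthonormal_basis_def)
    thus "(\<Sum>\<beta>\<in>UNIV. 4 * (norm (sff f u (e \<alpha>) (e \<beta>)))\<^sup>2 - sff f u (e \<alpha>) (e \<alpha>) \<bullet> sff f u (e \<beta>) (e \<beta>)) < 0"
      using PP go by blast
  qed
qed

end
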